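(* Let $N=2p$ and let $2^{-1}$ denote the inverse of $2$ modulo $2^N-1$. Then (1) $S(2)\equiv \big(1-(2^p+1)2^{-1}\big)+(2^p+1)2^{-1}\cdot\frac{2^{N}-1}{3}-2^{-1}\Big(\big(\tfrac{2}{p}\big)2^p+1\Big)G_p \pmod{2^N-1}$; (2) $G_p^2\equiv\big(\tfrac{-1}{p}\big)\Big(p-\frac{2^N-1}{3}\Big)\pmod{2^N-1}$.
   Context: Let $p$ be an odd prime and $g$ an odd integer which is a primitive root modulo $p$ and modulo $2p$. Define $D_0^{(p)}=\{g^{2k}\bmod p : 0\le k\le \frac{p-1}{2}-1\}$, $D_1^{(p)}=\{g^{2k+1}\bmod p : 0\le k\le \frac{p-1}{2}-1\}$, $D_0^{(2p)}=\{g^{2k}\bmod 2p : 0\le k\le \frac{p-1}{2}-1\}$, $D_1^{(2p)}=\{g^{2k+1}\bmod 2p : 0\le k\le \frac{p-1}{2}-1\}$, viewed as subsets of $\{0,\dots,p-1\}$ resp. $\{0,1,\dots,2p-1\}$. For $j\in\{0,1\}$ let $2D_j^{(p)}=\{2a \bmod 2p : a\in D_j^{(p)}\}$. Let $C_1=D_1^{(2p)}\cup 2D_1^{(p)}\cup\{0\}$ and $C_0=D_0^{(2p)}\cup 2D_0^{(p)}\cup\{p\}$ (these partition $\{0,\dots,2p-1\}$). The binary sequence $s$ of period $2p$ is $s_i=1$ if $i\bmod 2p\in C_1$ and $s_i=0$ otherwise, and $S(x)=\sum_{i=0}^{2p-1}s_ix^i\in\mathbb{Z}[x]$, so $S(2)=\sum_{i=0}^{2p-1}s_i2^i$.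 Here $\left(\frac{a}{p}\right)$ is the Legendre symbol, and $G_p=\sum_{a=1}^{p-1}\left(\frac{a}{p}\right)2^{2a}\bmod (2^{2p}-1)$. *)

theory Defs
  imports "HOL-Number_Theory.Number_Theory"
begin

definition D0p :: "nat \<Rightarrow> int \<Rightarrow> nat set" where
  "D0p p g = {nat ((g ^ (2*k)) mod int p) | k. k \<le> (p - 1) div 2 - 1}"

definition D1p :: "nat \<Rightarrow> int \<Rightarrow> nat set" where
  "D1p p g = {nat ((g ^ (2*k+1)) mod int p) | k. k \<le> (p - 1) div 2 - 1}"

definition D02p :: "nat \<Rightarrow> int \<Rightarrow> nat set" where
  "D02p p g = {nat ((g ^ (2*k)) mod int (2*p)) | k. k \<le> (p - 1) div 2 - 1}"

definition D12p :: "nat \<Rightarrow> int \<Rightarrow> nat set" where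
  "D12p p g = {nat ((g ^ (2*k+1)) mod int (2*p)) | k. k \<le> (p - 1) div 2 - 1}"

definition twice_mod :: "nat \<Rightarrow> nat set \<Rightarrow> nat set" where
  "twice_mod p D = {(2*a) mod (2*p) | a. a \<in> D}"

definition C1 :: "nat \<Rightarrow> int \<Rightarrow> nat set" where
  "C1 p g = D12p p g \<union> twice_mod p (D1p p g) \<union> {0}"

definition C0 :: "nat \<Rightarrow> int \<Rightarrow> nat set" where
  "C0 p g = D02p p g \<union> twice_mod p (D0p p g) \<union> {p}"

definition seq_s :: "nat \<Rightarrow> int \<Rightarrow> nat \<Rightarrow> int" where
  "seq_s p g i = (if i mod (2*p) \<in> C1 p g then 1 else 0)"

definition S2 :: "nat \<Rightarrow> int \<Rightarrow> int" where
  "S2 p g = (\<Sum>i<2*p. seq_s p g i * 2 ^ i)"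

definition Gp :: "nat \<Rightarrow> int" where
  "Gp p = (\<Sum>a=1..p-1. Legendre (int a) (int p) * 2 ^ (2*a)) mod (2 ^ (2*p) - 1)"

end

theory Submission
  imports Defs
begin

lemma leg_cong:
  assumes "[a = b] (mod m)"
  shows "Legendre a m = Legendre b m"
proof -
  have s: "[b = a] (mod m)" using assms by (rule cong_sym)
  have 1: "[a = 0] (mod m) = [b = 0] (mod m)"
  proof
    assume "[a = 0] (mod m)" then show "[b = 0] (mod m)" by (rule cong_trans[OF s])
  next
    assume "[b = 0] (mod m)" then show "[a = 0] (mod m)" by (rule cong_trans[OF assms])
  qed
  have 2: "QuadRes m a = QuadRes m b"
    unfolding QuadRes_def
  proof
    assume "\<exists>y. [y\<^sup>2 = a] (mod m)"
    then obtain y where "[y\<^sup>2 = a] (mod m)" by blast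
    then have "[y\<^sup>2 = b] (mod m)" by (rule cong_trans[OF _ assms])
    then show "\<exists>y. [y\<^sup>2 = b] (mod m)" by blast
  next
    assume "\<exists>y. [y\<^sup>2 = b] (mod m)"
    then obtain y where "[y\<^sup>2 = b] (mod m)" by blast
    then have "[y\<^sup>2 = a] (mod m)" by (rule cong_trans[OF _ s])
    then show "\<exists>y. [y\<^sup>2 = a] (mod m)" by blast
  qed
  show ?thesis unfolding Legendre_def using 1 2 by simp
qed

lemma leg_vals: "Legendre a m = 0 \<or> Legendre a m = 1 \<or> Legendre a m = -1"
  unfolding Legendre_def by auto

lemma leg_zero: "Legendre a m = 0 \<longleftrightarrow> [a = 0] (mod m)"
  unfolding Legendre_def by auto

lemma small_dvd_zero:
  fixes d :: int
  assumes "m dvd d" "\<bar>d\<bar> < m"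
  shows "d = 0"
proof (rule ccontr)
  assume "d \<noteq> 0"
  then have "\<bar>m\<bar> \<le> \<bar>d\<bar>" using dvd_imp_le_int[of d m] assms(1) by blast
  with assms(2) show False by simp
qed

lemma leg_mult:
  assumes "prime p" "2 < p"
  shows "Legendre (a*b) (int p) = Legendre a (int p) * Legendre b (int p)"
proof -
  let ?e = "(p - 1) div 2"
  have e1: "[Legendre (a*b) (int p) = (a*b)^?e] (mod int p)" by (rule euler_criterion[OF assms])
  have e2: "[Legendre a (int p) = a^?e] (mod int p)" by (rule euler_criterion[OF assms])
  have e3: "[Legendre b (int p) = b^?e] (mod int p)" by (rule euler_criterion[OF assms])
  have e23: "[Legendre a (int p) * Legendre b (int p) = a^?e * b^?e] (mod int p)"
    by (rule cong_mult[OF e2 e3])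
  from e1 have e1': "[Legendre (a*b) (int p) = a^?e * b^?e] (mod int p)"
    by (simp add: power_mult_distrib)
  have "[Legendre (a*b) (int p) = Legendre a (int p) * Legendre b (int p)] (mod int p)"
    by (rule cong_trans[OF e1' cong_sym[OF e23]])
  then have "int p dvd (Legendre (a*b) (int p) - Legendre a (int p) * Legendre b (int p))"
    by (simp add: cong_iff_dvd_diff)
  moreover have "\<bar>Legendre (a*b) (int p) - Legendre a (int p) * Legendre b (int p)\<bar> < int p"
  proof -
    have p3: "int p > 2" using assms(2) by simp
    have b1: "\<bar>Legendre a (int p)\<bar> \<le> 1" using leg_vals[of a "int p"] by auto
    have b2: "\<bar>Legendre b (int p)\<bar> \<le> 1" using leg_vals[of b "int p"] by auto
    have b3: "\<bar>Legendre (a*b) (int p)\<bar> \<le> 1" using leg_vals[of "a*b" "int p"] by auto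
    have b4: "\<bar>Legendre a (int p) * Legendre b (int p)\<bar> \<le> 1"
      unfolding abs_mult using b1 b2 by (simp add: mult_le_one)
    have "\<bar>Legendre (a*b) (int p) - Legendre a (int p) * Legendre b (int p)\<bar>
       \<le> \<bar>Legendre (a*b) (int p)\<bar> + \<bar>Legendre a (int p) * Legendre b (int p)\<bar>"
      by (rule abs_triangle_ineq4)
    then show ?thesis using b3 b4 p3 by linarith
  qed
  ultimately have "Legendre (a*b) (int p) - Legendre a (int p) * Legendre b (int p) = 0"
    by (rule small_dvd_zero)
  then show ?thesis by simp
qed

lemma perm_sum:
  assumes "inj_on \<phi> {..<(n::nat)}" "\<And>x. x < n \<Longrightarrow> \<phi> x < n"
  shows "(\<Sum>x<n. F (\<phi> x)) = (\<Sum>x<n. F x)"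
proof -
  have "\<phi> ` {..<n} = {..<n}"
    by (rule endo_inj_surj) (use assms in auto)
  then show ?thesis using sum.reindex[OF assms(1), of F] by simp
qed

lemma inj_add_mod: "inj_on (\<lambda>x. (x + h) mod (p::nat)) {..<p}"
proof (rule inj_onI)
  fix x y assume "x \<in> {..<p}" "y \<in> {..<p}" "(x + h) mod p = (y + h) mod p"
  then have "[x + h = y + h] (mod p)" by (simp add: cong_def)
  then have "[x = y] (mod p)" by (simp add: cong_add_rcancel_nat)
  with \<open>x \<in> {..<p}\<close> \<open>y \<in> {..<p}\<close> show "x = y" by (simp add: cong_def)
qed

lemma inj_mult_mod: assumes "coprime k (p::nat)" shows "inj_on (\<lambda>x. (x * k) mod p) {..<p}"
proof (rule inj_onI)
  fix x y assume "x \<in> {..<p}" "y \<in> {..<p}" "(x * k) mod p = (y * k) mod p"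
  then have "[x * k = y * k] (mod p)" by (simp add: cong_def)
  then have "[x = y] (mod p)" using assms cong_mult_rcancel_nat by (metis coprime_commute)
  with \<open>x \<in> {..<p}\<close> \<open>y \<in> {..<p}\<close> show "x = y" by (simp add: cong_def)
qed

lemma pow_period:
  fixes b m :: int
  assumes "[b ^ n = 1] (mod m)"
  shows "[b ^ k = b ^ (k mod n)] (mod m)"
proof -
  have "b ^ k = b ^ (n * (k div n) + k mod n)" by simp
  also have "\<dots> = (b ^ n) ^ (k div n) * b ^ (k mod n)" unfolding power_add power_mult by simp
  finally have "b ^ k = (b ^ n) ^ (k div n) * b ^ (k mod n)" .
  moreover have "[(b ^ n) ^ (k div n) * b ^ (k mod n) = 1 ^ (k div n) * b ^ (k mod n)] (mod m)"
    using assms by (intro cong_mult cong_pow) auto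
  ultimately show ?thesis by simp
qed

lemma sum_even_odd: "(\<Sum>i<2*(n::nat). f i) = (\<Sum>j<n. f (2*j) + f (2*j+1))"
proof (induction n)
  case (Suc n)
  have e: "2 * Suc n = Suc (Suc (2*n))" by simp
  show ?case unfolding e using Suc by (simp add: sum.distrib add_ac)
qed simp

lemma odd_eq:
  fixes y z p :: nat
  assumes "y < 2*p" "z < 2*p" "y mod p = z mod p" "odd y" "odd z" "odd p"
  shows "y = z"
proof -
  have p0: "p > 0" using assms(6) by (cases p) auto
  define a where "a = y div p"
  define b where "b = z div p"
  define r where "r = y mod p"
  have ya: "y = p*a + r" unfolding a_def r_def by simp
  have zb: "z = p*b + r" unfolding b_def r_def using assms(3) by simp
  have "a < 2" unfolding a_def using assms(1) by (simp add: less_mult_imp_div_less mult.commute)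
  then have a01: "a = 0 \<or> a = 1" by auto
  have "b < 2" unfolding b_def using assms(2) by (simp add: less_mult_imp_div_less mult.commute)
  then have b01: "b = 0 \<or> b = 1" by auto
  show ?thesis using a01 b01 ya zb assms(4,5,6) by auto
qed

lemma odd_mod2:
  fixes a q :: int
  assumes "odd a"
  shows "odd (a mod (2*q))"
proof -
  have "a mod (2*q) mod 2 = a mod 2" by (simp add: mod_mod_cancel)
  then show ?thesis using assms by (simp add: odd_iff_mod_2_eq_one)
qed

context
  fixes p :: nat and g :: int
  assumes pp: "prime p" and op: "odd p" and og: "odd g"
    and pr: "residue_primroot p (nat (g mod int p))"
begin

lemma p2: "2 < p"
proof -
  have "p \<ge> 2" using pp prime_ge_2_nat by blast
  moreover have "p \<noteq> 2" using op by auto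
  ultimately show ?thesis by simp
qed

lemma g0_pow: "int (nat (g mod int p) ^ n mod p) = g ^ n mod int p"
proof -
  have pos: "int p > 0" using p2 by simp
  have "int (nat (g mod int p)) = g mod int p" using pos by simp
  then have "int (nat (g mod int p) ^ n mod p) = (g mod int p) ^ n mod int p"
    by (simp add: of_nat_mod of_nat_power)
  also have "\<dots> = g ^ n mod int p" by (simp add: power_mod)
  finally show ?thesis .
qed

lemma chi_nz:
  assumes "0 < n" "n < p"
  shows "Legendre (int n) (int p) = 1 \<or> Legendre (int n) (int p) = -1"
proof -
  have "\<not> [int n = 0] (mod int p)"
  proof
    assume "[int n = 0] (mod int p)"
    then have "int p dvd int n" by (simp add: cong_0_iff)
    then have "p dvd n" by simp
    then show False using assms by (simp add: nat_dvd_not_less)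
  qed
  then have "Legendre (int n) (int p) \<noteq> 0" using leg_zero by blast
  then show ?thesis using leg_vals by blast
qed

lemma chi0: "Legendre (int 0) (int p) = 0"
  using leg_zero by simp

lemma chip: "Legendre (int p) (int p) = 0"
  using leg_zero by (simp add: cong_0_iff)

lemma leg_g: "Legendre g (int p) = -1"
proof -
  define g0 where "g0 = nat (g mod int p)"
  have cop: "coprime p g0" and ordg: "ord p g0 = totient p"
    using pr unfolding g0_def residue_primroot_def by auto
  have tot: "totient p = p - 1" using totient_prime pp by blast
  have ne0: "Legendre g (int p) \<noteq> 0"
  proof
    assume "Legendre g (int p) = 0"
    then have "[g = 0] (mod int p)" using leg_zero by blast
    then have "g mod int p = 0" by (simp add: cong_def)
    then have "g0 = 0" unfolding g0_def by simp
    then have "p = 1" using cop by simp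
    then show False using pp by simp
  qed
  have ne1: "Legendre g (int p) \<noteq> 1"
  proof
    let ?e = "(p - 1) div 2"
    assume "Legendre g (int p) = 1"
    then have "[1 = g ^ ?e] (mod int p)" using euler_criterion[OF pp p2, of g] by simp
    then have "g ^ ?e mod int p = 1" using p2 by (simp add: cong_def)
    then have "int (g0 ^ ?e mod p) = 1" using g0_pow unfolding g0_def by simp
    then have "g0 ^ ?e mod p = 1" by simp
    then have "[g0 ^ ?e = 1] (mod p)" using p2 by (simp add: cong_def)
    then have "ord p g0 dvd ?e" using ord_divides[of g0 ?e p] by blast
    then have "p - 1 dvd ?e" using ordg tot by simp
    moreover have "?e > 0" using p2 by simp
    ultimately have "p - 1 \<le> ?e" by (simp add: dvd_imp_le)
    then show False using p2 by simp
  qed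
  show ?thesis using leg_vals[of g "int p"] ne0 ne1 by blast
qed

lemma leg_gpow: "Legendre (g ^ n) (int p) = (-1) ^ n"
proof (induction n)
  case 0
  have "\<not> [1 = 0] (mod int p)" using p2 by (simp add: cong_def)
  moreover have "QuadRes (int p) 1" unfolding QuadRes_def by (rule exI[of _ 1]) simp
  ultimately show ?case by (simp add: Legendre_def)
next
  case (Suc n)
  have "Legendre (g ^ Suc n) (int p) = Legendre (g * g ^ n) (int p)" by simp
  also have "\<dots> = Legendre g (int p) * Legendre (g ^ n) (int p)" by (rule leg_mult[OF pp p2])
  finally show ?case using Suc leg_g by simp
qed

lemma D1p_iff: "x \<in> D1p p g \<longleftrightarrow> 1 \<le> x \<and> x < p \<and> Legendre (int x) (int p) = -1"
proof
  assume "x \<in> D1p p g"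
  then obtain k where xk: "x = nat (g ^ (2*k+1) mod int p)" unfolding D1p_def by blast
  have pos: "int p > 0" using p2 by simp
  have ix: "int x = g ^ (2*k+1) mod int p" using xk pos by simp
  have "int x < int p" using ix pos by simp
  then have xp: "x < p" by simp
  have "Legendre (int x) (int p) = Legendre (g ^ (2*k+1)) (int p)"
    unfolding ix by (rule leg_cong) simp
  also have "\<dots> = (-1) ^ (2*k+1)" by (rule leg_gpow)
  also have "\<dots> = -1" by simp
  finally have lx: "Legendre (int x) (int p) = -1" .
  have "x \<noteq> 0"
  proof
    assume x0: "x = 0"
    have "Legendre (int x) (int p) = 0" unfolding x0 by (rule chi0)
    then show False using lx by simp
  qed
  then show "1 \<le> x \<and> x < p \<and> Legendre (int x) (int p) = -1" using xp lx by simp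
next
  assume a: "1 \<le> x \<and> x < p \<and> Legendre (int x) (int p) = -1"
  define g0 where "g0 = nat (g mod int p)"
  have pr0: "residue_primroot p g0" using pr unfolding g0_def .
  have p1: "p > 1" using p2 by simp
  have gen: "bij_betw (\<lambda>i. g0 ^ i mod p) {..<totient p} (totatives p)"
    by (rule residue_primroot_is_generator[OF p1 pr0])
  have "\<not> p dvd x" using a by (simp add: nat_dvd_not_less)
  then have "coprime p x" using prime_imp_coprime pp by blast
  then have "x \<in> totatives p" using a by (simp add: in_totatives_iff coprime_commute)
  then have "x \<in> (\<lambda>i. g0 ^ i mod p) ` {..<totient p}"
    using gen unfolding bij_betw_def by simp
  then obtain i where i: "i \<in> {..<totient p}" "x = g0 ^ i mod p" by (rule imageE)
  have tot: "totient p = p - 1" using totient_prime pp by blast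
  have "int x = int (g0 ^ i mod p)" using i(2) by simp
  also have "\<dots> = g ^ i mod int p" unfolding g0_def by (rule g0_pow)
  finally have ix: "int x = g ^ i mod int p" .
  have "Legendre (int x) (int p) = Legendre (g ^ i) (int p)"
    unfolding ix by (rule leg_cong) simp
  also have "\<dots> = (-1) ^ i" by (rule leg_gpow)
  finally have "(-1::int) ^ i = -1" using a by simp
  then have oi: "odd i" by (cases "even i") auto
  then obtain k where ik: "i = 2*k+1" using oddE by blast
  obtain m where pm: "p = 2*m+1" using op oddE by blast
  have "i < 2*m" using i(1) tot pm by simp
  then have kb: "k \<le> (p - 1) div 2 - 1" using ik pm by simp
  have xe: "x = nat (g ^ (2*k+1) mod int p)" using ix ik by simp
  show "x \<in> D1p p g" unfolding D1p_def mem_Collect_eq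
    by (rule exI[of _ k]) (use kb xe in simp)
qed


lemma pow2p:
  shows "nat (g^n mod int (2*p)) < 2*p"
    and "odd (nat (g^n mod int (2*p)))"
    and "int (nat (g^n mod int (2*p))) mod int p = g^n mod int p"
proof -
  have pos2: "int (2*p) > 0" using p2 by simp
  have iz: "int (nat (g^n mod int (2*p))) = g^n mod int (2*p)" using pos2 by simp
  show "nat (g^n mod int (2*p)) < 2*p"
  proof -
    have "g^n mod int (2*p) < int (2*p)" using pos2 by simp
    then show ?thesis using iz by linarith
  qed
  have "odd (g^n)" using og by simp
  then have "odd (g^n mod (2 * int p))" by (rule odd_mod2)
  then have "odd (int (nat (g^n mod int (2*p))))" using iz by simp
  then show "odd (nat (g^n mod int (2*p)))" by (metis even_of_nat_iff)
  have "int p dvd int (2*p)" by simp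
  then show "int (nat (g^n mod int (2*p))) mod int p = g^n mod int p"
    unfolding iz by (simp add: mod_mod_cancel)
qed

lemma D12p_iff: "z \<in> D12p p g \<longleftrightarrow> z < 2*p \<and> odd z \<and> Legendre (int z) (int p) = -1"
proof
  assume "z \<in> D12p p g"
  then obtain k where zk: "z = nat (g ^ (2*k+1) mod int (2*p))" unfolding D12p_def by blast
  have "int z mod int p = g^(2*k+1) mod int p"
    using pow2p(3)[of "2*k+1"] unfolding zk[symmetric] .
  then have "[int z = g^(2*k+1)] (mod int p)" unfolding cong_def .
  then have "Legendre (int z) (int p) = Legendre (g^(2*k+1)) (int p)" by (rule leg_cong)
  also have "\<dots> = (-1) ^ (2*k+1)" by (rule leg_gpow)
  also have "\<dots> = -1" by simp
  moreover have "z < 2*p" using pow2p(1)[of "2*k+1"] unfolding zk[symmetric] .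
  moreover have "odd z" using pow2p(2)[of "2*k+1"] unfolding zk[symmetric] .
  ultimately show "z < 2*p \<and> odd z \<and> Legendre (int z) (int p) = -1" by simp
next
  assume a: "z < 2*p \<and> odd z \<and> Legendre (int z) (int p) = -1"
  define x where "x = z mod p"
  have p0: "p > 0" using p2 by simp
  have "[int x = int z] (mod int p)" unfolding x_def cong_def by (simp add: of_nat_mod)
  then have lx: "Legendre (int x) (int p) = -1" using a leg_cong by metis
  have "x \<noteq> 0"
  proof
    assume x0: "x = 0"
    have "Legendre (int x) (int p) = 0" unfolding x0 by (rule chi0)
    then show False using lx by simp
  qed
  moreover have "x < p" unfolding x_def using p0 by simp
  ultimately have "x \<in> D1p p g" using lx D1p_iff by simp
  then obtain k where xk: "x = nat (g ^ (2*k+1) mod int p)" and kb: "k \<le> (p - 1) div 2 - 1"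
    unfolding D1p_def by blast
  define y where "y = nat (g ^ (2*k+1) mod int (2*p))"
  have y1: "int y mod int p = g^(2*k+1) mod int p"
    using pow2p(3)[of "2*k+1"] unfolding y_def[symmetric] .
  have x1: "int x = g^(2*k+1) mod int p" using xk p0 by simp
  have "int (y mod p) = int x" unfolding of_nat_mod y1 x1 ..
  then have ym: "y mod p = z mod p" unfolding x_def by simp
  have y2: "y < 2*p" using pow2p(1)[of "2*k+1"] unfolding y_def[symmetric] .
  have y3: "odd y" using pow2p(2)[of "2*k+1"] unfolding y_def[symmetric] .
  have "y = z" using odd_eq[OF y2 _ ym y3 _ op] a by blast
  then show "z \<in> D12p p g" unfolding D12p_def mem_Collect_eq y_def
    using kb by blast
qed

lemma tw_iff: "y \<in> twice_mod p (D1p p g) \<longleftrightarrow>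
   even y \<and> 0 < y \<and> y < 2*p \<and> Legendre (int (y div 2)) (int p) = -1"
proof
  assume "y \<in> twice_mod p (D1p p g)"
  then obtain a where ya: "y = (2*a) mod (2*p)" and a: "a \<in> D1p p g"
    unfolding twice_mod_def by blast
  have a': "1 \<le> a \<and> a < p \<and> Legendre (int a) (int p) = -1" using a D1p_iff by blast
  then have "y = 2*a" using ya by simp
  then show "even y \<and> 0 < y \<and> y < 2*p \<and> Legendre (int (y div 2)) (int p) = -1"
    using a' by simp
next
  assume b: "even y \<and> 0 < y \<and> y < 2*p \<and> Legendre (int (y div 2)) (int p) = -1"
  define a where "a = y div 2"
  have ya: "y = 2*a" unfolding a_def using b by simp
  have "1 \<le> a" "a < p" using b ya by auto
  moreover have "Legendre (int a) (int p) = -1" using b unfolding a_def by simp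
  ultimately have "1 \<le> a \<and> a < p \<and> Legendre (int a) (int p) = -1" by simp
  then have "a \<in> D1p p g" using D1p_iff by blast
  moreover have "y = (2*a) mod (2*p)" using ya b by simp
  ultimately show "y \<in> twice_mod p (D1p p g)" unfolding twice_mod_def by blast
qed

lemma C1_iff:
  assumes "i < 2*p"
  shows "i \<in> C1 p g \<longleftrightarrow> i = 0 \<or> (even i \<and> 0 < i \<and> Legendre (int (i div 2)) (int p) = -1)
        \<or> (odd i \<and> Legendre (int i) (int p) = -1)"
  unfolding C1_def using D12p_iff[of i] tw_iff[of i] assms by auto

lemma odd_nz:
  assumes "odd i" "i < 2*p" "i \<noteq> p"
  shows "Legendre (int i) (int p) = 1 \<or> Legendre (int i) (int p) = -1"
proof -
  have "\<not> p dvd i"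
  proof
    assume "p dvd i"
    then obtain c where ic: "i = p*c" by blast
    have "c < 2" using assms(2) ic p2 by simp
    then have "c = 0 \<or> c = 1" by auto
    then show False using ic assms by (elim disjE) simp_all
  qed
  then have "\<not> [int i = 0] (mod int p)" by (simp add: cong_0_iff)
  then have "Legendre (int i) (int p) \<noteq> 0" using leg_zero by blast
  then show ?thesis using leg_vals by blast
qed

lemma seq2:
  assumes "i < 2*p"
  shows "2 * seq_s p g i = (if even i then 1 - Legendre (int (i div 2)) (int p) else 1 - Legendre (int i) (int p))
     + (if i = 0 then 1 else 0) - (if i = p then 1 else 0)"
proof -
  have im: "i mod (2*p) = i" using assms by simp
  have sq: "seq_s p g i = (if i \<in> C1 p g then 1 else 0)" unfolding seq_s_def im ..
  consider "i = 0" | "i = p" | "even i" "0 < i" | "odd i" "i \<noteq> p" by auto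
  then show ?thesis
  proof cases
    case 1
    then show ?thesis unfolding sq using C1_iff[OF assms] chi0 p2 by simp
  next
    case 2
    then have "odd i" using op by simp
    then show ?thesis unfolding sq using C1_iff[OF assms] chip 2 p2 by simp
  next
    case 3
    have "0 < i div 2" "i div 2 < p" using 3 assms by auto
    then have v: "Legendre (int (i div 2)) (int p) = 1 \<or> Legendre (int (i div 2)) (int p) = -1"
      by (rule chi_nz)
    have "i \<noteq> p" using 3 op by auto
    then show ?thesis unfolding sq using C1_iff[OF assms] 3 v by auto
  next
    case 4
    have v: "Legendre (int i) (int p) = 1 \<or> Legendre (int i) (int p) = -1"
      using odd_nz 4 assms by blast
    have "i \<noteq> 0" using odd_pos[OF 4(1)] by simp
    then show ?thesis unfolding sq using C1_iff[OF assms] 4 v by auto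
  qed
qed

end

lemma three_T_gen: "3 * (\<Sum>j<n. (4::int)^j) = 4^n - 1"
  by (induction n) (simp_all add: algebra_simps)

lemma three_dvd: "odd n \<Longrightarrow> (3::int) dvd 2^n + 1"
proof -
  assume "odd n"
  have "[(2::int) = -1] (mod 3)" by (simp add: cong_def)
  then have "[(2::int)^n = (-1)^n] (mod 3)" by (rule cong_pow)
  then have "[(2::int)^n + 1 = (-1)^n + 1] (mod 3)" by (rule cong_add) simp
  then show ?thesis using \<open>odd n\<close> by (simp add: cong_0_iff)
qed

context
  fixes p :: nat and g :: int
  assumes pp: "prime p" and op: "odd p" and og: "odd g"
    and pr: "residue_primroot p (nat (g mod int p))"
begin

lemma p2': "2 < p" by (rule p2[OF pp op og pr])

lemma M_eq: "(2::int)^(2*p) - 1 = 4^p - 1"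
  by (simp add: power_mult)

lemma cong4: "[(4::int)^k = 4^(k mod p)] (mod (2^(2*p) - 1))"
proof -
  have "[(4::int)^p = 1] (mod (2^(2*p) - 1))" unfolding cong_iff_dvd_diff M_eq by simp
  then show ?thesis by (rule pow_period)
qed

lemma cong2: "[(2::int)^k = 2^(k mod (2*p))] (mod (2^(2*p) - 1))"
proof -
  have "[(2::int)^(2*p) = 1] (mod (2^(2*p) - 1))" unfolding cong_iff_dvd_diff by simp
  then show ?thesis by (rule pow_period)
qed

lemma Gp_sum: "(\<Sum>a=1..p-1. Legendre (int a) (int p) * 2^(2*a)) = (\<Sum>j<p. Legendre (int j) (int p) * 4^j)"
proof -
  have e: "{..<p} = insert 0 {1..p-1}" using p2' by auto
  have "(\<Sum>j<p. Legendre (int j) (int p) * 4^j) = Legendre (int 0) (int p) * 4^0 + (\<Sum>j=1..p-1. Legendre (int j) (int p) * 4^j)"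
    unfolding e by (subst sum.insert) auto
  also have "\<dots> = (\<Sum>j=1..p-1. Legendre (int j) (int p) * 4^j)"
    using chi0[OF pp op og pr] by simp
  also have "\<dots> = (\<Sum>a=1..p-1. Legendre (int a) (int p) * 2^(2*a))"
    by (simp add: power_mult)
  finally show ?thesis by simp
qed

lemma Gp_cong: "[Gp p = (\<Sum>j<p. Legendre (int j) (int p) * 4^j)] (mod (2^(2*p) - 1))"
  unfolding Gp_def Gp_sum by simp

lemma sum_E: "(\<Sum>i<2*p. (if even i then 1 - Legendre (int (i div 2)) (int p) else 1 - Legendre (int i) (int p)) * (2::int)^i)
  = 3 * (\<Sum>j<p. (4::int)^j) - (\<Sum>j<p. Legendre (int j) (int p) * 4^j)
    - (\<Sum>j<p. Legendre (int (2*j+1)) (int p) * 2^(2*j+1))"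
proof -
  let ?E = "\<lambda>i. (if even i then 1 - Legendre (int (i div 2)) (int p) else 1 - Legendre (int i) (int p)) * (2::int)^i"
  have "(\<Sum>i<2*p. ?E i) = (\<Sum>j<p. ?E (2*j) + ?E (2*j+1))" by (rule sum_even_odd)
  also have "\<dots> = (\<Sum>j<p. 3 * 4^j - Legendre (int j) (int p) * 4^j - Legendre (int (2*j+1)) (int p) * 2^(2*j+1))"
  proof (rule sum.cong)
    fix j assume "j \<in> {..<p}"
    have a: "(2::int)^(2*j) = 4^j" by (simp add: power_mult)
    have b: "(2::int)^(2*j+1) = 2 * 4^j" by (simp add: power_mult)
    show "?E (2*j) + ?E (2*j+1) = 3 * 4^j - Legendre (int j) (int p) * 4^j - Legendre (int (2*j+1)) (int p) * 2^(2*j+1)"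
    proof -
      have e1: "?E (2*j) = (1 - Legendre (int j) (int p)) * 4^j" using a(1) by simp
      have e2: "?E (2*j+1) = (1 - Legendre (int (2*j+1)) (int p)) * (2 * 4^j)" using b by simp
      show ?thesis unfolding e1 e2 b by (simp add: algebra_simps)
    qed
  qed simp
  also have "\<dots> = 3 * (\<Sum>j<p. (4::int)^j) - (\<Sum>j<p. Legendre (int j) (int p) * 4^j)
    - (\<Sum>j<p. Legendre (int (2*j+1)) (int p) * 2^(2*j+1))"
    by (simp add: sum_subtractf sum_distrib_left)
  finally show ?thesis .
qed

lemma S2_eq: "2 * S2 p g = 3 * (\<Sum>j<p. (4::int)^j) + 1 - 2^p - (\<Sum>j<p. Legendre (int j) (int p) * 4^j)
    - (\<Sum>j<p. Legendre (int (2*j+1)) (int p) * 2^(2*j+1))"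
proof -
  let ?E = "\<lambda>i. (if even i then 1 - Legendre (int (i div 2)) (int p) else 1 - Legendre (int i) (int p)) * (2::int)^i"
  have "2 * S2 p g = (\<Sum>i<2*p. (2 * seq_s p g i) * 2^i)"
    unfolding S2_def by (simp add: sum_distrib_left mult.assoc)
  also have "\<dots> = (\<Sum>i<2*p. ?E i + (if i = 0 then 2^i else 0) - (if i = p then 2^i else 0))"
  proof (rule sum.cong)
    fix i assume "i \<in> {..<2*p}"
    then have "i < 2*p" by simp
    then show "(2 * seq_s p g i) * 2^i = ?E i + (if i = 0 then 2^i else 0) - (if i = p then 2^i else 0)"
      unfolding seq2[OF pp op og pr \<open>i < 2*p\<close>] by (simp add: algebra_simps)
  qed simp
  also have "\<dots> = (\<Sum>i<2*p. ?E i) + (\<Sum>i<2*p. (if i = 0 then (2::int)^i else 0)) - (\<Sum>i<2*p. (if i = p then (2::int)^i else 0))"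
    by (simp add: sum_subtractf sum.distrib)
  also have "(\<Sum>i<2*p. (if i = 0 then (2::int)^i else 0)) = 1"
    using p2' by (simp add: sum.delta)
  also have "(\<Sum>i<2*p. (if i = p then (2::int)^i else 0)) = 2^p"
    using p2' by (simp add: sum.delta)
  finally show ?thesis unfolding sum_E by simp
qed

end

lemma alg1:
  fixes S M T G0 H Gp u L P :: int
  assumes "2*S = 3*T + 1 - P - G0 - H" "M = 3*T"
  shows "S - ((1 - (P+1)*u) + (P+1)*u*T - u*(L*P+1)*Gp) =
    (1 - S)*(2*u-1) + u*M - u*(H - L*P*G0) - u*((P+1)*T) + u*(L*P+1)*(Gp - G0)"
proof -
  have e: "((1 - S)*(2*u-1) + u*M - u*(H - L*P*G0) - u*((P+1)*T) + u*(L*P+1)*(Gp - G0))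
     - (S - ((1 - (P+1)*u) + (P+1)*u*T - u*(L*P+1)*Gp))
     = u*((3*T + 1 - P - G0 - H) - 2*S) + u*(M - 3*T)"
    by (simp add: algebra_simps)
  have "u*((3*T + 1 - P - G0 - H) - 2*S) + u*(M - 3*T) = 0" using assms by simp
  then show ?thesis using e by linarith
qed

context
  fixes p :: nat and g :: int
  assumes pp: "prime p" and op: "odd p" and og: "odd g"
    and pr: "residue_primroot p (nat (g mod int p))"
begin

lemma H_cong: "[(\<Sum>j<p. Legendre (int (2*j+1)) (int p) * 2^(2*j+1)) =
   Legendre 2 (int p) * 2^p * (\<Sum>j<p. Legendre (int j) (int p) * 4^j)] (mod (2^(2*p) - 1))"
proof -
  define h where "h = (p+1) div 2"
  have h2: "2*h = p+1" unfolding h_def using op by simp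
  define \<phi> where "\<phi> j = (j+h) mod p" for j
  define F where "F j = Legendre (int j) (int p) * (4::int)^j" for j
  let ?M = "(2::int)^(2*p) - 1"
  have p0: "p > 0" using p2'[OF pp op og pr] by simp
  have tm: "[Legendre (int (2*j+1)) (int p) * 2^(2*j+1) = Legendre 2 (int p) * 2^p * F (\<phi> j)] (mod ?M)"
    for j
  proof -
    have a1: "[2 * \<phi> j = 2 * (j+h)] (mod p)" unfolding \<phi>_def by (rule cong_mult) simp_all
    have a2: "2 * (j+h) = (2*j+1) + p" using h2 by simp
    have a3: "[(2*j+1) + p = 2*j+1] (mod p)" by (simp only: cong_def mod_add_self2)
    have "[2 * \<phi> j = 2*j+1] (mod p)" using cong_trans[OF a1[unfolded a2] a3] .
    then have "[int (2 * \<phi> j) = int (2*j+1)] (mod int p)" by (simp only: cong_int_iff)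
    then have "[2 * int (\<phi> j) = int (2*j+1)] (mod int p)" by simp
    then have "Legendre (2 * int (\<phi> j)) (int p) = Legendre (int (2*j+1)) (int p)" by (rule leg_cong)
    then have c1: "Legendre (int (2*j+1)) (int p) = Legendre 2 (int p) * Legendre (int (\<phi> j)) (int p)"
      using leg_mult[OF pp p2'[OF pp op og pr]] by metis
    have b1: "[(4::int)^(j+h) = 4^(\<phi> j)] (mod ?M)" unfolding \<phi>_def by (rule cong4[OF pp op og pr])
    have b2: "(2::int)^p * 4^(j+h) = 2^(2*p) * 2^(2*j+1)"
    proof -
      have e: "(4::int)^(j+h) = 2^(2*(j+h))" unfolding power_mult by simp
      have ex: "p + (2*j+1+p) = 2*p + (2*j+1)" by simp
      have "(2::int)^p * 4^(j+h) = 2^p * 2^(2*(j+h))" unfolding e ..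
      also have "\<dots> = 2^p * 2^(2*j+1+p)" unfolding a2 ..
      also have "\<dots> = 2^(p + (2*j+1+p))" by (simp only: power_add)
      also have "\<dots> = 2^(2*p + (2*j+1))" unfolding ex ..
      also have "\<dots> = 2^(2*p) * 2^(2*j+1)" by (simp only: power_add)
      finally show ?thesis .
    qed
    have b3: "[(2::int)^(2*p) * 2^(2*j+1) = 1 * 2^(2*j+1)] (mod ?M)"
      by (rule cong_mult) (simp_all add: cong_iff_dvd_diff)
    have "[(2::int)^(2*j+1) = 2^p * 4^(j+h)] (mod ?M)"
      unfolding b2 using cong_sym[OF b3] by simp
    also have "[(2::int)^p * 4^(j+h) = 2^p * 4^(\<phi> j)] (mod ?M)"
      by (rule cong_mult[OF cong_refl b1])
    finally have c2: "[(2::int)^(2*j+1) = 2^p * 4^(\<phi> j)] (mod ?M)" .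
    have "[Legendre (int (2*j+1)) (int p) * 2^(2*j+1) =
          Legendre (int (2*j+1)) (int p) * (2^p * 4^(\<phi> j))] (mod ?M)"
      by (rule cong_mult[OF cong_refl c2])
    also have "Legendre (int (2*j+1)) (int p) * (2^p * 4^(\<phi> j)) = Legendre 2 (int p) * 2^p * F (\<phi> j)"
      unfolding c1 F_def by (simp add: algebra_simps)
    finally show ?thesis .
  qed
  have "[(\<Sum>j<p. Legendre (int (2*j+1)) (int p) * 2^(2*j+1)) = (\<Sum>j<p. Legendre 2 (int p) * 2^p * F (\<phi> j))] (mod ?M)"
    by (rule cong_sum) (rule tm)
  also have "(\<Sum>j<p. Legendre 2 (int p) * 2^p * F (\<phi> j)) = Legendre 2 (int p) * 2^p * (\<Sum>j<p. F (\<phi> j))"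
    by (simp add: sum_distrib_left)
  also have "(\<Sum>j<p. F (\<phi> j)) = (\<Sum>j<p. F j)"
    unfolding \<phi>_def by (rule perm_sum[OF inj_add_mod]) (simp add: p0)
  finally show ?thesis unfolding F_def .
qed

lemma T_eq: "3 * (\<Sum>j<p. (4::int)^j) = 2^(2*p) - 1"
  using three_T_gen[of p] by (simp add: power_mult)

lemma dvd_T: "((2::int)^(2*p) - 1) dvd (2^p + 1) * (\<Sum>j<p. (4::int)^j)"
proof -
  obtain c where c: "(2::int)^p + 1 = 3 * c" using three_dvd[OF op] by blast
  have "(2^p + 1) * (\<Sum>j<p. (4::int)^j) = c * (3 * (\<Sum>j<p. (4::int)^j))" unfolding c by simp
  then show ?thesis unfolding T_eq by simp
qed

lemma part1:
  assumes u: "[2 * u = 1] (mod (2 ^ (2*p) - 1))"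
  shows "[S2 p g = (1 - (2 ^ p + 1) * u) + (2 ^ p + 1) * u * ((2 ^ (2*p) - 1) div 3)
            - u * (Legendre 2 (int p) * 2 ^ p + 1) * Gp p] (mod (2 ^ (2*p) - 1))"
proof -
  define M :: int where "M = 2^(2*p) - 1"
  define T where "T = (\<Sum>j<p. (4::int)^j)"
  define G0 where "G0 = (\<Sum>j<p. Legendre (int j) (int p) * 4^j)"
  define H where "H = (\<Sum>j<p. Legendre (int (2*j+1)) (int p) * 2^(2*j+1))"
  define L where "L = Legendre 2 (int p)"
  define P :: int where "P = 2^p"
  have f1: "2 * S2 p g = 3*T + 1 - P - G0 - H" unfolding T_def P_def G0_def H_def by (rule S2_eq[OF pp op og pr])
  have f2: "M = 3*T" unfolding M_def T_def using T_eq by simp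
  have Md: "M div 3 = T" unfolding f2 by simp
  have f3: "M dvd (H - L*P*G0)"
    using H_cong unfolding cong_iff_dvd_diff M_def H_def L_def P_def G0_def .
  have f4: "M dvd (P+1)*T" using dvd_T unfolding M_def P_def T_def .
  have f5: "M dvd (Gp p - G0)" using Gp_cong[OF pp op og pr] unfolding cong_iff_dvd_diff M_def G0_def .
  have f6: "M dvd (2*u - 1)" using u unfolding cong_iff_dvd_diff M_def .
  have eq: "S2 p g - ((1 - (P+1)*u) + (P+1)*u*T - u*(L*P+1)*Gp p) =
    (1 - S2 p g)*(2*u-1) + u*M - u*(H - L*P*G0) - u*((P+1)*T) + u*(L*P+1)*(Gp p - G0)"
    by (rule alg1[OF f1 f2])
  have "M dvd (1 - S2 p g)*(2*u-1) + u*M - u*(H - L*P*G0) - u*((P+1)*T) + u*(L*P+1)*(Gp p - G0)"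
  proof -
    have d1: "M dvd (1 - S2 p g)*(2*u-1)" by (rule dvd_mult[OF f6])
    have d2: "M dvd u*M" by (rule dvd_triv_right)
    have d3: "M dvd u*(H - L*P*G0)" by (rule dvd_mult[OF f3])
    have d4: "M dvd u*((P+1)*T)" by (rule dvd_mult[OF f4])
    have d5: "M dvd u*(L*P+1)*(Gp p - G0)" by (rule dvd_mult[OF f5])
    show ?thesis by (rule dvd_add[OF dvd_diff[OF dvd_diff[OF dvd_add[OF d1 d2] d3] d4] d5])
  qed
  then have "M dvd S2 p g - ((1 - (P+1)*u) + (P+1)*u*(M div 3) - u*(L*P+1)*Gp p)"
    unfolding Md eq .
  then show ?thesis unfolding cong_iff_dvd_diff M_def P_def L_def by simp
qed

end

context
  fixes p :: nat and g :: int
  assumes pp: "prime p" and op: "odd p" and og: "odd g"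
    and pr: "residue_primroot p (nat (g mod int p))"
begin

lemma p2e: "2 < p" by (rule p2[OF pp op og pr])

lemma chi_mulmod: "Legendre (int ((a*b) mod p)) (int p) = Legendre (int a) (int p) * Legendre (int b) (int p)"
proof -
  have "[int ((a*b) mod p) = int a * int b] (mod int p)" by (simp add: cong_def of_nat_mod)
  then have "Legendre (int ((a*b) mod p)) (int p) = Legendre (int a * int b) (int p)" by (rule leg_cong)
  also have "\<dots> = Legendre (int a) (int p) * Legendre (int b) (int p)" by (rule leg_mult[OF pp p2e])
  finally show ?thesis .
qed

lemma chi_sum0: "(\<Sum>t<p. Legendre (int t) (int p)) = 0"
proof -
  define g1 where "g1 = nat (g mod int p)"
  have p0: "int p > 0" using p2e by simp
  have cop: "coprime g1 p" using pr unfolding g1_def residue_primroot_def by (simp add: coprime_commute)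
  have "int g1 = g mod int p" unfolding g1_def using p0 by simp
  then have "[int g1 = g] (mod int p)" by simp
  then have lg: "Legendre (int g1) (int p) = -1" using leg_cong leg_g[OF pp op og pr] by metis
  have "(\<Sum>t<p. Legendre (int t) (int p)) = (\<Sum>t<p. Legendre (int ((t*g1) mod p)) (int p))"
    by (rule perm_sum[OF inj_mult_mod[OF cop], symmetric]) (use p0 in simp)
  also have "\<dots> = (\<Sum>t<p. Legendre (int t) (int p) * (-1))"
    unfolding chi_mulmod lg ..
  also have "\<dots> = - (\<Sum>t<p. Legendre (int t) (int p))" by (simp add: sum_negf)
  finally show ?thesis by simp
qed

lemma sum4k:
  assumes "coprime k p"
  shows "[(\<Sum>a<p. (4::int)^(a*k)) = (\<Sum>a<p. 4^a)] (mod (2^(2*p) - 1))"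
proof -
  have p0: "p > 0" using p2e by simp
  have "[(\<Sum>a<p. (4::int)^(a*k)) = (\<Sum>a<p. 4^((a*k) mod p))] (mod (2^(2*p) - 1))"
    by (rule cong_sum) (rule cong4[OF pp op og pr])
  also have "(\<Sum>a<p. (4::int)^((a*k) mod p)) = (\<Sum>a<p. 4^a)"
    by (rule perm_sum[OF inj_mult_mod[OF assms]]) (use p0 in simp)
  finally show ?thesis .
qed

lemma sum4p: "[(\<Sum>a<p. (4::int)^(a*p)) = int p] (mod (2^(2*p) - 1))"
proof -
  have "[(\<Sum>a<p. (4::int)^(a*p)) = (\<Sum>a<p. 4^((a*p) mod p))] (mod (2^(2*p) - 1))"
    by (rule cong_sum) (rule cong4[OF pp op og pr])
  also have "(\<Sum>a<p. (4::int)^((a*p) mod p)) = int p" by simp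
  finally show ?thesis .
qed

lemma chi_sq: "a < p \<Longrightarrow> (Legendre (int a) (int p))^2 = (if a = 0 then 0 else 1)"
proof -
  assume "a < p"
  show ?thesis
  proof (cases "a = 0")
    case True then show ?thesis using chi0[OF pp op og pr] by simp
  next
    case False
    then have "Legendre (int a) (int p) = 1 \<or> Legendre (int a) (int p) = -1"
      using chi_nz[OF pp op og pr] \<open>a < p\<close> by simp
    then show ?thesis using False by auto
  qed
qed

lemma inner:
  assumes "t < p"
  shows "[(\<Sum>a<p. (Legendre (int a) (int p))^2 * (4::int)^(a*(1+t))) =
     (if t = p - 1 then int p - 1 else (\<Sum>j<p. (4::int)^j) - 1)] (mod (2^(2*p) - 1))"
proof -
  have p0: "p > 0" using p2e by simp
  have "(\<Sum>a<p. (Legendre (int a) (int p))^2 * (4::int)^(a*(1+t))) =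
        (\<Sum>a<p. (4::int)^(a*(1+t)) - (if a = 0 then (4::int)^(a*(1+t)) else 0))"
    by (rule sum.cong) (simp_all add: chi_sq)
  also have "\<dots> = (\<Sum>a<p. (4::int)^(a*(1+t))) - 1"
    using p0 by (simp add: sum_subtractf sum.delta)
  finally have e: "(\<Sum>a<p. (Legendre (int a) (int p))^2 * (4::int)^(a*(1+t))) = (\<Sum>a<p. (4::int)^(a*(1+t))) - 1" .
  show ?thesis
  proof (cases "t = p - 1")
    case True
    then have "1 + t = p" using p0 by simp
    then have "[(\<Sum>a<p. (4::int)^(a*(1+t))) - 1 = int p - 1] (mod (2^(2*p) - 1))"
      using sum4p by (intro cong_diff) simp_all
    then show ?thesis unfolding e using True by simp
  next
    case False
    then have "0 < 1 + t" "1 + t < p" using assms by auto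
    then have "\<not> p dvd (1 + t)" by (simp add: nat_dvd_not_less)
    then have "coprime p (1 + t)" by (rule prime_imp_coprime[OF pp])
    then have "coprime (1 + t) p" by (simp add: coprime_commute)
    then have s: "[(\<Sum>a<p. (4::int)^(a*(1+t))) = (\<Sum>j<p. (4::int)^j)] (mod (2^(2*p) - 1))"
      by (rule sum4k)
    have "[(\<Sum>a<p. (4::int)^(a*(1+t))) - 1 = (\<Sum>j<p. (4::int)^j) - 1] (mod (2^(2*p) - 1))"
      by (rule cong_diff[OF s cong_refl])
    then show ?thesis unfolding e using False by simp
  qed
qed

lemma rowcong:
  assumes "a < p"
  shows "[(\<Sum>b<p. (Legendre (int a) (int p) * 4^a) * (Legendre (int b) (int p) * (4::int)^b)) =
          (\<Sum>t<p. (Legendre (int a) (int p))^2 * Legendre (int t) (int p) * 4^(a*(1+t)))] (mod (2^(2*p) - 1))"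
proof (cases "a = 0")
  case True
  then show ?thesis using chi0[OF pp op og pr] by simp
next
  case False
  have p0: "p > 0" using p2e by simp
  have "\<not> p dvd a" using False assms by (simp add: nat_dvd_not_less)
  then have cop: "coprime a p" using prime_imp_coprime[OF pp] by (simp add: coprime_commute)
  let ?F = "\<lambda>b. (Legendre (int a) (int p) * 4^a) * (Legendre (int b) (int p) * (4::int)^b)"
  have "(\<Sum>b<p. ?F b) = (\<Sum>t<p. ?F ((t*a) mod p))"
    by (rule perm_sum[OF inj_mult_mod[OF cop], symmetric]) (use p0 in simp)
  also have "[(\<Sum>t<p. ?F ((t*a) mod p)) =
       (\<Sum>t<p. (Legendre (int a) (int p))^2 * Legendre (int t) (int p) * 4^(a*(1+t)))] (mod (2^(2*p) - 1))"
  proof (rule cong_sum)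
    fix t
    have c: "[(4::int)^((t*a) mod p) = 4^(t*a)] (mod (2^(2*p) - 1))"
      by (rule cong_sym[OF cong4[OF pp op og pr]])
    have "?F ((t*a) mod p) = (Legendre (int a) (int p) * 4^a * Legendre (int t) (int p) * Legendre (int a) (int p)) * 4^((t*a) mod p)"
      unfolding chi_mulmod by (simp add: algebra_simps)
    also have "[\<dots> = (Legendre (int a) (int p) * 4^a * Legendre (int t) (int p) * Legendre (int a) (int p)) * 4^(t*a)] (mod (2^(2*p) - 1))"
      by (rule cong_mult[OF cong_refl c])
    also have "(Legendre (int a) (int p) * 4^a * Legendre (int t) (int p) * Legendre (int a) (int p)) * (4::int)^(t*a)
       = (Legendre (int a) (int p))^2 * Legendre (int t) (int p) * (4^a * 4^(t*a))"
      by (simp add: power2_eq_square algebra_simps)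
    also have "(4::int)^a * 4^(t*a) = 4^(a*(1+t))"
      by (simp add: power_add[symmetric] algebra_simps)
    finally show "[?F ((t*a) mod p) = (Legendre (int a) (int p))^2 * Legendre (int t) (int p) * 4^(a*(1+t))] (mod (2^(2*p) - 1))" .
  qed
  finally show ?thesis .
qed

lemma G0sq: "[(\<Sum>j<p. Legendre (int j) (int p) * (4::int)^j)^2 =
   Legendre (int (p-1)) (int p) * (int p - (\<Sum>j<p. (4::int)^j))] (mod (2^(2*p) - 1))"
proof -
  let ?M = "(2::int)^(2*p) - 1"
  let ?c = "\<lambda>t. Legendre (int t) (int p)"
  let ?T = "\<Sum>j<p. (4::int)^j"
  let ?Q = "\<lambda>t. if t = p - 1 then int p - 1 else ?T - 1"
  have "(\<Sum>j<p. ?c j * (4::int)^j)^2 = (\<Sum>a<p. \<Sum>b<p. (?c a * 4^a) * (?c b * (4::int)^b))"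
    unfolding power2_eq_square sum_product ..
  also have "[\<dots> = (\<Sum>a<p. \<Sum>t<p. (?c a)^2 * ?c t * 4^(a*(1+t)))] (mod ?M)"
    by (rule cong_sum) (rule rowcong, simp)
  also have "(\<Sum>a<p. \<Sum>t<p. (?c a)^2 * ?c t * (4::int)^(a*(1+t))) = (\<Sum>t<p. ?c t * (\<Sum>a<p. (?c a)^2 * 4^(a*(1+t))))"
    by (subst sum.swap) (simp add: sum_distrib_left algebra_simps)
  also have "[\<dots> = (\<Sum>t<p. ?c t * ?Q t)] (mod ?M)"
    by (rule cong_sum) (rule cong_mult[OF cong_refl inner], simp)
  also have "(\<Sum>t<p. ?c t * ?Q t) = (\<Sum>t<p. ?c t * (?T - 1) + (if t = p - 1 then ?c t * (int p - ?T) else 0))"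
    by (rule sum.cong) (simp_all add: algebra_simps)
  also have "\<dots> = (?T - 1) * (\<Sum>t<p. ?c t) + ?c (p-1) * (int p - ?T)"
    using p2e by (simp add: sum.distrib sum.delta sum_distrib_right mult.commute)
  also have "\<dots> = ?c (p-1) * (int p - ?T)" unfolding chi_sum0 by simp
  finally show ?thesis .
qed

end

theorem lemma9:
  fixes p :: nat and g :: int and u :: int
  assumes "prime p" and "odd p" and "odd g"
    and "residue_primroot p (nat (g mod int p))"
    and "residue_primroot (2*p) (nat (g mod int (2*p)))"
    and "[2 * u = 1] (mod (2 ^ (2*p) - 1))"
  shows "[S2 p g = (1 - (2 ^ p + 1) * u) + (2 ^ p + 1) * u * ((2 ^ (2*p) - 1) div 3)
            - u * (Legendre 2 (int p) * 2 ^ p + 1) * Gp p] (mod (2 ^ (2*p) - 1))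
         \<and> [(Gp p) ^ 2 = Legendre (-1) (int p) * (int p - (2 ^ (2*p) - 1) div 3)]
            (mod (2 ^ (2*p) - 1))"
proof
  show "[S2 p g = (1 - (2 ^ p + 1) * u) + (2 ^ p + 1) * u * ((2 ^ (2*p) - 1) div 3)
            - u * (Legendre 2 (int p) * 2 ^ p + 1) * Gp p] (mod (2 ^ (2*p) - 1))"
    by (rule part1[OF assms(1,2,3,4,6)])
  have p2: "2 < p" by (rule p2[OF assms(1,2,3,4)])
  have T3: "3 * (\<Sum>j<p. (4::int)^j) = 2^(2*p) - 1" by (rule T_eq[OF assms(1,2,3,4)])
  then have Md: "((2::int)^(2*p) - 1) div 3 = (\<Sum>j<p. (4::int)^j)" by simp
  have "[int (p - 1) = -1] (mod int p)" using p2 by (simp add: cong_iff_dvd_diff of_nat_diff)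
  then have L: "Legendre (int (p - 1)) (int p) = Legendre (-1) (int p)" by (rule leg_cong)
  have "[(Gp p) ^ 2 = (\<Sum>j<p. Legendre (int j) (int p) * (4::int)^j) ^ 2] (mod (2 ^ (2*p) - 1))"
    by (rule cong_pow[OF Gp_cong[OF assms(1,2,3,4)]])
  also have "[(\<Sum>j<p. Legendre (int j) (int p) * (4::int)^j) ^ 2 =
     Legendre (int (p-1)) (int p) * (int p - (\<Sum>j<p. (4::int)^j))] (mod (2 ^ (2*p) - 1))"
    by (rule G0sq[OF assms(1,2,3,4)])
  finally show "[(Gp p) ^ 2 = Legendre (-1) (int p) * (int p - (2 ^ (2*p) - 1) div 3)]
            (mod (2 ^ (2*p) - 1))" unfolding Md L .
qed

end
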